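(* In the setting described in the context, define $\Delta_u(\eta,e_1,e_2):=\hat u(\eta,e_1,e_2)-\hat u(\eta,0,0)$. Fix $\delta>0$. For every $R\in(0,\min\{a,b\})$ there exists $C_R>0$ such that $$|\Delta_u(\eta,e_1,e_2)|\le C_R(|e_1|+|e_2|)$$ for all $\eta\in\mathcal T_R:=\{\eta\in\mathbb{R}^2: r(\eta)\le R\}$ and all $e_1,e_2\in\mathbb{R}$ with $|e_1|+|e_2|\le\delta$.
   Context: Let $A>0$. For $i\in\{1,2\}$ let $k_i,\mu_i,g_i:[0,A]\to\mathbb{R}_{\ge0}$ be continuous with positive integrals over $[0,A]$, and let $\zeta_i>0$ solve $\int_0^Ak_i(a)e^{-\int_0^a(\zeta_i+\mu_i(s))ds}da=1$. For continuous nonnegative $k,\mu,g$ and $\zeta\in\mathbb{R}$: $\mathcal G_\kappa(k,\mu,\zeta)=\int_0^A a k(a)e^{-\int_0^a(\zeta+\mu)}da$, $\mathcal G_\gamma(g,\zeta,\mu)=\int_0^A g(a)e^{-\int_0^a(\zeta+\mu)}da$, $\mathcal G_\pi(k,\mu,\zeta)(a)=\int_a^A k(s)e^{\int_s^a(\zeta+\mu(l))dl}ds$. Let $\langle f,h\rangle=\int_0^Afh$, $n_i(a)=e^{-\int_0^a(\zeta_i+\mu_i)}$, $\gamma_1=\mathcal G_\gamma(g_1,\zeta_2,\mu_2)$, $\gamma_2=\mathcal G_\gamma(g_2,\zeta_1,\mu_1)$. Let $\varepsilon>0$, $\beta>\frac{\varepsilon}{4(1+\varepsilon)}$, $x_1^*(0)>\frac{1}{\zeta_2\gamma_2}$,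 $a:=\frac{1}{x_1^*(0)\gamma_2}$, $b:=\zeta_1-\zeta_2+a=\gamma_1x_2^*(0)>0$ (defining $x_2^*(0)>0$). For $e_1,e_2\in\mathbb{R}$: $\hat\zeta_i=\zeta_i-e_i$, $\hat\kappa_i=\mathcal G_\kappa(k_i,\mu_i,\hat\zeta_i)$, $\hat\gamma_1=\mathcal G_\gamma(g_1,\hat\zeta_2,\mu_2)$, $\hat\gamma_2=\mathcal G_\gamma(g_2,\hat\zeta_1,\mu_1)$, $\hat\pi_{0,i}=\mathcal G_\pi(k_i,\mu_i,\hat\zeta_i)$, and $\hat u(\eta,e_1,e_2)=\hat\zeta_2-\frac{1}{x_1^*(0)\hat\gamma_2}+\beta\big[(1+\varepsilon)(\hat\zeta_2-\hat\zeta_1)-\frac{\varepsilon}{x_1^*(0)\hat\gamma_2}-\frac{\hat\kappa_1}{\hat\gamma_2\langle\hat\pi_{0,1},n_1\rangle x_1^*(0)}e^{-\eta_1}+(1+\varepsilon)\frac{\hat\gamma_1\langle\hat\pi_{0,2},n_2\rangle x_2^*(0)}{\hat\kappa_2}e^{\eta_2}\big]$ for $\eta=(\eta_1,\eta_2)\in\mathbb{R}^2$. Also $\phi_1(\eta_1)=a(1-e^{-\eta_1})$, $\phi_2(\eta_2)=b(e^{\eta_2}-1)$, $r(\eta)=\sqrt{\phi_1(\eta_1)^2+\phi_2(\eta_2)^2}$. *)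

theory Defs
  imports "HOL-Analysis.Analysis"
begin

definition surv :: "(real \<Rightarrow> real) \<Rightarrow> real \<Rightarrow> real \<Rightarrow> real" where
  "surv mu zeta a = exp (- integral {0..a} (\<lambda>s. zeta + mu s))"

definition G_kappa :: "real \<Rightarrow> (real \<Rightarrow> real) \<Rightarrow> (real \<Rightarrow> real) \<Rightarrow> real \<Rightarrow> real" where
  "G_kappa A k mu zeta = integral {0..A} (\<lambda>a. a * k a * surv mu zeta a)"

definition G_gamma :: "real \<Rightarrow> (real \<Rightarrow> real) \<Rightarrow> real \<Rightarrow> (real \<Rightarrow> real) \<Rightarrow> real" where
  "G_gamma A g zeta mu = integral {0..A} (\<lambda>a. g a * surv mu zeta a)"

text \<open>G_pi(k,mu,zeta)(a) = int_a^A k(s) exp(int_s^a (zeta+mu)) ds; for s \<ge> a,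
  int_s^a (zeta+mu) = - int_a^s (zeta+mu).\<close>
definition G_pi :: "real \<Rightarrow> (real \<Rightarrow> real) \<Rightarrow> (real \<Rightarrow> real) \<Rightarrow> real \<Rightarrow> real \<Rightarrow> real" where
  "G_pi A k mu zeta a = integral {a..A} (\<lambda>s. k s * exp (- integral {a..s} (\<lambda>l. zeta + mu l)))"

definition ip :: "real \<Rightarrow> (real \<Rightarrow> real) \<Rightarrow> (real \<Rightarrow> real) \<Rightarrow> real" where
  "ip A f h = integral {0..A} (\<lambda>a. f a * h a)"

definition u_hat ::
  "real \<Rightarrow> (real \<Rightarrow> real) \<Rightarrow> (real \<Rightarrow> real) \<Rightarrow> (real \<Rightarrow> real) \<Rightarrow>
   (real \<Rightarrow> real) \<Rightarrow> (real \<Rightarrow> real) \<Rightarrow> (real \<Rightarrow> real) \<Rightarrow>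
   real \<Rightarrow> real \<Rightarrow> real \<Rightarrow> real \<Rightarrow> real \<Rightarrow> real \<Rightarrow>
   real \<Rightarrow> real \<Rightarrow> real \<Rightarrow> real \<Rightarrow> real" where
  "u_hat A k1 mu1 g1 k2 mu2 g2 zeta1 zeta2 x1 x2 \<epsilon> \<beta> eta1 eta2 e1 e2 =
     (let z1 = zeta1 - e1; z2 = zeta2 - e2;
          ka1 = G_kappa A k1 mu1 z1; ka2 = G_kappa A k2 mu2 z2;
          ga1 = G_gamma A g1 z2 mu2; ga2 = G_gamma A g2 z1 mu1;
          p1 = G_pi A k1 mu1 z1; p2 = G_pi A k2 mu2 z2;
          n1 = surv mu1 zeta1; n2 = surv mu2 zeta2
      in z2 - 1 / (x1 * ga2)
         + \<beta> * ((1 + \<epsilon>) * (z2 - z1) - \<epsilon> / (x1 * ga2)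
                 - ka1 / (ga2 * ip A p1 n1 * x1) * exp (- eta1)
                 + (1 + \<epsilon>) * (ga1 * ip A p2 n2 * x2) / ka2 * exp eta2))"

end

theory Submission
  imports Defs
begin

lemma exp_sub_one_bound: "\<bar>exp (x::real) - 1\<bar> \<le> \<bar>x\<bar> * exp \<bar>x\<bar>"
proof (cases "x \<ge> 0")
  case True
  have "1 - x \<le> exp (-x)" using exp_ge_add_one_self[of "-x"] by simp
  hence "(1 - x) * exp x \<le> exp (-x) * exp x" by (simp add: mult_right_mono)
  hence "(1 - x) * exp x \<le> 1" by (simp add: exp_minus field_simps)
  moreover have "exp x \<ge> 1" using True by simp
  ultimately show ?thesis using True by (simp add: algebra_simps)
next
  case False
  have "1 + x \<le> exp x" using exp_ge_add_one_self[of x] by simp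
  moreover have "exp x \<le> 1" using False by simp
  moreover have "exp \<bar>x\<bar> \<ge> 1" by simp
  ultimately have "\<bar>exp x - 1\<bar> \<le> \<bar>x\<bar> * 1" using False by linarith
  also have "\<dots> \<le> \<bar>x\<bar> * exp \<bar>x\<bar>" by (rule mult_left_mono) auto
  finally show ?thesis .
qed

lemma pw_bound:
  fixes F e w d A :: real
  assumes "\<bar>e\<bar> \<le> d" "0 \<le> w" "w \<le> A" "0 \<le> F"
  shows "\<bar>F * exp (e * w) - F\<bar> \<le> (\<bar>e\<bar> * A * exp (d * A)) * F"
    and "exp (- (d * A)) * F \<le> F * exp (e * w)"
    and "F * exp (e * w) \<le> exp (d * A) * F"
proof -
  have ew: "\<bar>e * w\<bar> \<le> d * A"
  proof -
    have "\<bar>e * w\<bar> = \<bar>e\<bar> * w" using assms by (simp add: abs_mult)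
    also have "\<dots> \<le> d * A" using assms by (intro mult_mono) auto
    finally show ?thesis .
  qed
  have ew2: "\<bar>e * w\<bar> \<le> \<bar>e\<bar> * A"
    using assms by (simp add: abs_mult mult_left_mono)
  have "\<bar>F * exp (e * w) - F\<bar> = F * \<bar>exp (e * w) - 1\<bar>"
  proof -
    have "F * exp (e * w) - F = F * (exp (e * w) - 1)" by (simp add: algebra_simps)
    thus ?thesis using assms by (simp add: abs_mult)
  qed
  also have "\<dots> \<le> F * (\<bar>e * w\<bar> * exp \<bar>e * w\<bar>)"
    using assms exp_sub_one_bound by (intro mult_left_mono) auto
  also have "\<dots> \<le> F * (\<bar>e\<bar> * A * exp (d * A))"
    using assms ew ew2 by (intro mult_left_mono mult_mono) auto
  finally show "\<bar>F * exp (e * w) - F\<bar> \<le> (\<bar>e\<bar> * A * exp (d * A)) * F" by (simp add: mult.commute)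
  have "exp (- (d * A)) \<le> exp (e * w)" using ew by simp
  hence "exp (- (d * A)) * F \<le> exp (e * w) * F" using assms by (intro mult_right_mono) auto
  thus "exp (- (d * A)) * F \<le> F * exp (e * w)" by (simp add: mult.commute)
  have "exp (e * w) \<le> exp (d * A)" using ew by simp
  hence "exp (e * w) * F \<le> exp (d * A) * F" using assms by (intro mult_right_mono) auto
  thus "F * exp (e * w) \<le> exp (d * A) * F" by (simp add: mult.commute)
qed

lemma int_lip:
  fixes f g :: "real \<Rightarrow> real"
  assumes "f integrable_on S" "g integrable_on S"
    and "\<And>x. x \<in> S \<Longrightarrow> \<bar>f x - g x\<bar> \<le> c * g x"
    and "\<And>x. x \<in> S \<Longrightarrow> lo * g x \<le> f x \<and> f x \<le> hi * g x"
  shows "\<bar>integral S f - integral S g\<bar> \<le> c * integral S g"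
    and "lo * integral S g \<le> integral S f"
    and "integral S f \<le> hi * integral S g"
proof -
  have "\<bar>integral S f - integral S g\<bar> = norm (integral S (\<lambda>x. f x - g x))"
    using assms by (simp add: integral_diff)
  also have "\<dots> \<le> integral S (\<lambda>x. c * g x)"
    using assms by (intro integral_norm_bound_integral) (auto intro: integrable_diff integrable_on_mult_right)
  also have "\<dots> = c * integral S g" by simp
  finally show "\<bar>integral S f - integral S g\<bar> \<le> c * integral S g" .
  have "integral S (\<lambda>x. lo * g x) \<le> integral S f"
    using assms by (intro integral_le) (auto intro: integrable_on_mult_right)
  thus "lo * integral S g \<le> integral S f" by simp
  have "integral S f \<le> integral S (\<lambda>x. hi * g x)"
    using assms by (intro integral_le) (auto intro: integrable_on_mult_right)
  thus "integral S f \<le> hi * integral S g" by simp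
qed

lemma int_shift:
  fixes mu :: "real \<Rightarrow> real"
  assumes "continuous_on {lo..hi} mu" "lo \<le> hi"
  shows "integral {lo..hi} (\<lambda>s. (z - e) + mu s) = integral {lo..hi} (\<lambda>s. z + mu s) - e * (hi - lo)"
proof -
  have i: "(\<lambda>s. z + mu s) integrable_on {lo..hi}"
    by (intro integrable_continuous_interval continuous_intros assms)
  have "integral {lo..hi} (\<lambda>s. (z - e) + mu s) = integral {lo..hi} (\<lambda>s. (z + mu s) - e)"
    by (simp add: algebra_simps)
  also have "\<dots> = integral {lo..hi} (\<lambda>s. z + mu s) - integral {lo..hi} (\<lambda>s. e)"
    using i by (intro integral_diff) auto
  also have "\<dots> = integral {lo..hi} (\<lambda>s. z + mu s) - e * (hi - lo)"
    using assms by (simp add: integral_const_real mult.commute)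
  finally show ?thesis .
qed

lemma surv_shift:
  assumes "continuous_on {0..A} mu" "a \<in> {0..A}"
  shows "surv mu (zeta - e) a = surv mu zeta a * exp (e * a)"
proof -
  have c: "continuous_on {0..a} mu" using assms by (auto intro: continuous_on_subset)
  show ?thesis unfolding surv_def using int_shift[OF c, of z e] assms
    by (simp add: int_shift[OF c] exp_add[symmetric] exp_diff)
qed

lemma Gg_shift:
  assumes "continuous_on {0..A} mu"
  shows "G_gamma A g (zeta - e) mu = integral {0..A} (\<lambda>a. (g a * surv mu zeta a) * exp (e * a))"
  unfolding G_gamma_def using surv_shift[OF assms]
  by (intro integral_cong) auto

lemma Gk_shift:
  assumes "continuous_on {0..A} mu"
  shows "G_kappa A k mu (zeta - e) = integral {0..A} (\<lambda>a. (a * k a * surv mu zeta a) * exp (e * a))"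
  unfolding G_kappa_def using surv_shift[OF assms]
  by (intro integral_cong) auto

lemma Gpi_shift:
  assumes "continuous_on {0..A} mu" "a \<in> {0..A}"
  shows "G_pi A k mu (zeta - e) a = integral {a..A} (\<lambda>s. (k s * exp (- integral {a..s} (\<lambda>l. zeta + mu l))) * exp (e * (s - a)))"
  unfolding G_pi_def
proof (intro integral_cong)
  fix s assume s: "s \<in> {a..A}"
  have c: "continuous_on {a..s} mu" using assms s by (auto intro: continuous_on_subset)
  show "k s * exp (- integral {a..s} (\<lambda>l. zeta - e + mu l)) =
        k s * exp (- integral {a..s} (\<lambda>l. zeta + mu l)) * exp (e * (s - a))"
    using s by (simp add: int_shift[OF c] exp_add[symmetric])
qed

lemma surv_cont:
  assumes "continuous_on {0..A} mu"
  shows "continuous_on {0..A} (surv mu z)"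
proof -
  have i: "(\<lambda>s. z + mu s) integrable_on {0..A}"
    by (intro integrable_continuous_interval continuous_intros assms)
  show ?thesis unfolding surv_def
    by (intro continuous_intros indefinite_integral_continuous_1 i)
qed

lemma surv_pos: "surv mu z a > 0" unfolding surv_def by simp

lemma Gpi_cont:
  assumes mu: "continuous_on {0..A} mu" and k: "continuous_on {0..A} k"
  shows "continuous_on {0..A} (G_pi A k mu z)"
proof -
  define M where "M x = integral {0..x} (\<lambda>l. z + mu l)" for x
  have i: "(\<lambda>s. z + mu s) integrable_on {0..A}"
    by (intro integrable_continuous_interval continuous_intros assms)
  have Mc: "continuous_on {0..A} M" unfolding M_def
    by (intro indefinite_integral_continuous_1 i)
  define h where "h s = k s * exp (- M s)" for s
  have hc: "continuous_on {0..A} h" unfolding h_def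
    by (intro continuous_intros Mc k)
  have hi: "h integrable_on {0..A}" by (intro integrable_continuous_interval hc)
  have eq: "G_pi A k mu z a = exp (M a) * integral {a..A} h" if a: "a \<in> {0..A}" for a
  proof -
    have "G_pi A k mu z a = integral {a..A} (\<lambda>s. exp (M a) * h s)"
      unfolding G_pi_def
    proof (intro integral_cong)
      fix s assume s: "s \<in> {a..A}"
      have "(\<lambda>l. z + mu l) integrable_on {0..s}"
        using i s a by (auto intro: integrable_on_subinterval)
      hence "integral {0..a} (\<lambda>l. z + mu l) + integral {a..s} (\<lambda>l. z + mu l) = M s"
        unfolding M_def using Henstock_Kurzweil_Integration.integral_combine[where a=0 and c=a and b=s and f="\<lambda>l. z + mu l"] a s by simp
      moreover have "M a = integral {0..a} (\<lambda>l. z + mu l)" by (simp add: M_def)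
      ultimately have "integral {a..s} (\<lambda>l. z + mu l) = M s - M a" by linarith
      thus "k s * exp (- integral {a..s} (\<lambda>l. z + mu l)) = exp (M a) * h s"
        unfolding h_def by (simp only:) (simp add: exp_diff exp_minus field_simps)
    qed
    also have "\<dots> = exp (M a) * integral {a..A} h" by simp
    finally show ?thesis .
  qed
  have "continuous_on {0..A} (\<lambda>a. exp (M a) * integral {a..A} h)"
    by (intro continuous_intros Mc indefinite_integral_continuous_1' hi)
  moreover have "continuous_on {0..A} (\<lambda>a. exp (M a) * integral {a..A} h) = continuous_on {0..A} (G_pi A k mu z)"
    using eq by (intro continuous_on_cong) auto
  ultimately show ?thesis by simp
qed

definition good :: "real \<Rightarrow> (real \<Rightarrow> real \<Rightarrow> real) \<Rightarrow> bool" where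
  "good d f \<longleftrightarrow> (\<exists>C\<ge>0. \<exists>B\<ge>0. \<forall>e1 e2. \<bar>e1\<bar> + \<bar>e2\<bar> \<le> d \<longrightarrow>
      \<bar>f e1 e2 - f 0 0\<bar> \<le> C * (\<bar>e1\<bar> + \<bar>e2\<bar>) \<and> \<bar>f e1 e2\<bar> \<le> B)"

definition bb :: "real \<Rightarrow> (real \<Rightarrow> real \<Rightarrow> real) \<Rightarrow> bool" where
  "bb d f \<longleftrightarrow> (\<exists>m>0. \<forall>e1 e2. \<bar>e1\<bar> + \<bar>e2\<bar> \<le> d \<longrightarrow> m \<le> \<bar>f e1 e2\<bar>)"

lemma goodI:
  assumes "C \<ge> 0" "B \<ge> 0"
    "\<And>e1 e2. \<bar>e1\<bar> + \<bar>e2\<bar> \<le> d \<Longrightarrow> \<bar>f e1 e2 - f 0 0\<bar> \<le> C * (\<bar>e1\<bar> + \<bar>e2\<bar>)"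
    "\<And>e1 e2. \<bar>e1\<bar> + \<bar>e2\<bar> \<le> d \<Longrightarrow> \<bar>f e1 e2\<bar> \<le> B"
  shows "good d f"
  unfolding good_def using assms by blast

lemma good_const: "good d (\<lambda>e1 e2. c)"
  unfolding good_def by (rule exI[of _ 0]) (auto intro!: exI[of _ "\<bar>c\<bar>"])

lemma good_fst: "d \<ge> 0 \<Longrightarrow> good d (\<lambda>e1 e2. e1)"
  unfolding good_def by (rule exI[of _ 1]) (auto intro!: exI[of _ d])

lemma good_snd: "d \<ge> 0 \<Longrightarrow> good d (\<lambda>e1 e2. e2)"
  unfolding good_def by (rule exI[of _ 1]) (auto intro!: exI[of _ d])

lemma good_add:
  assumes "good d f" "good d g" shows "good d (\<lambda>e1 e2. f e1 e2 + g e1 e2)"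
proof -
  obtain C1 B1 where 1: "C1 \<ge> 0" "B1 \<ge> 0" "\<forall>e1 e2. \<bar>e1\<bar> + \<bar>e2\<bar> \<le> d \<longrightarrow>
      \<bar>f e1 e2 - f 0 0\<bar> \<le> C1 * (\<bar>e1\<bar> + \<bar>e2\<bar>) \<and> \<bar>f e1 e2\<bar> \<le> B1"
    using assms(1) unfolding good_def by blast
  obtain C2 B2 where 2: "C2 \<ge> 0" "B2 \<ge> 0" "\<forall>e1 e2. \<bar>e1\<bar> + \<bar>e2\<bar> \<le> d \<longrightarrow>
      \<bar>g e1 e2 - g 0 0\<bar> \<le> C2 * (\<bar>e1\<bar> + \<bar>e2\<bar>) \<and> \<bar>g e1 e2\<bar> \<le> B2"
    using assms(2) unfolding good_def by blast
  show ?thesis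
  proof (rule goodI[of "C1 + C2" "B1 + B2"])
    fix e1 e2 :: real assume h: "\<bar>e1\<bar> + \<bar>e2\<bar> \<le> d"
    from 1(3)[rule_format, OF h] 2(3)[rule_format, OF h]
    show "\<bar>f e1 e2 + g e1 e2 - (f 0 0 + g 0 0)\<bar> \<le> (C1 + C2) * (\<bar>e1\<bar> + \<bar>e2\<bar>)"
      by (smt (verit) distrib_right)
  next
    fix e1 e2 :: real assume h: "\<bar>e1\<bar> + \<bar>e2\<bar> \<le> d"
    from 1(3)[rule_format, OF h] 2(3)[rule_format, OF h]
    show "\<bar>f e1 e2 + g e1 e2\<bar> \<le> B1 + B2" by (smt (verit))
  qed (use 1 2 in auto)
qed

lemma good_neg:
  assumes "good d f" shows "good d (\<lambda>e1 e2. - f e1 e2)"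
proof -
  have "\<And>e1 e2. \<bar>- f e1 e2 - - f 0 0\<bar> = \<bar>f e1 e2 - f 0 0\<bar>" by linarith
  thus ?thesis using assms unfolding good_def by simp
qed

lemma good_diff:
  assumes "good d f" "good d g" shows "good d (\<lambda>e1 e2. f e1 e2 - g e1 e2)"
  using good_add[OF assms(1) good_neg[OF assms(2)]] by simp

lemma good_mult:
  assumes "good d f" "good d g" "d \<ge> 0" shows "good d (\<lambda>e1 e2. f e1 e2 * g e1 e2)"
proof -
  obtain C1 B1 where 1: "C1 \<ge> 0" "B1 \<ge> 0" "\<forall>e1 e2. \<bar>e1\<bar> + \<bar>e2\<bar> \<le> d \<longrightarrow>
      \<bar>f e1 e2 - f 0 0\<bar> \<le> C1 * (\<bar>e1\<bar> + \<bar>e2\<bar>) \<and> \<bar>f e1 e2\<bar> \<le> B1"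
    using assms(1) unfolding good_def by blast
  obtain C2 B2 where 2: "C2 \<ge> 0" "B2 \<ge> 0" "\<forall>e1 e2. \<bar>e1\<bar> + \<bar>e2\<bar> \<le> d \<longrightarrow>
      \<bar>g e1 e2 - g 0 0\<bar> \<le> C2 * (\<bar>e1\<bar> + \<bar>e2\<bar>) \<and> \<bar>g e1 e2\<bar> \<le> B2"
    using assms(2) unfolding good_def by blast
  have g0: "\<bar>g 0 0\<bar> \<le> B2" using 2(3) assms(3) by auto
  show ?thesis
  proof (rule goodI[of "B1 * C2 + B2 * C1" "B1 * B2"])
    fix e1 e2 :: real assume h: "\<bar>e1\<bar> + \<bar>e2\<bar> \<le> d"
    note a = 1(3)[rule_format, OF h] 2(3)[rule_format, OF h]
    let ?E = "\<bar>e1\<bar> + \<bar>e2\<bar>"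
    have "f e1 e2 * g e1 e2 - f 0 0 * g 0 0 = f e1 e2 * (g e1 e2 - g 0 0) + g 0 0 * (f e1 e2 - f 0 0)"
      by (simp add: algebra_simps)
    hence "\<bar>f e1 e2 * g e1 e2 - f 0 0 * g 0 0\<bar> \<le> \<bar>f e1 e2\<bar> * \<bar>g e1 e2 - g 0 0\<bar> + \<bar>g 0 0\<bar> * \<bar>f e1 e2 - f 0 0\<bar>"
      by (metis abs_mult abs_triangle_ineq)
    also have "\<dots> \<le> B1 * (C2 * ?E) + B2 * (C1 * ?E)"
      using a g0 1 2 by (intro add_mono mult_mono) auto
    finally show "\<bar>f e1 e2 * g e1 e2 - f 0 0 * g 0 0\<bar> \<le> (B1 * C2 + B2 * C1) * ?E"
      by (simp add: algebra_simps)
    show "\<bar>f e1 e2 * g e1 e2\<bar> \<le> B1 * B2"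
      using a 1 2 by (simp add: abs_mult mult_mono)
  qed (use 1 2 in auto)
qed

lemma good_inv:
  assumes "good d f" "bb d f" "d \<ge> 0" shows "good d (\<lambda>e1 e2. inverse (f e1 e2))"
proof -
  obtain C1 B1 where 1: "C1 \<ge> 0" "B1 \<ge> 0" "\<forall>e1 e2. \<bar>e1\<bar> + \<bar>e2\<bar> \<le> d \<longrightarrow>
      \<bar>f e1 e2 - f 0 0\<bar> \<le> C1 * (\<bar>e1\<bar> + \<bar>e2\<bar>) \<and> \<bar>f e1 e2\<bar> \<le> B1"
    using assms(1) unfolding good_def by blast
  obtain m where m: "m > 0" "\<forall>e1 e2. \<bar>e1\<bar> + \<bar>e2\<bar> \<le> d \<longrightarrow> m \<le> \<bar>f e1 e2\<bar>"
    using assms(2) unfolding bb_def by blast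
  have f0: "m \<le> \<bar>f 0 0\<bar>" using m assms(3) by auto
  show ?thesis
  proof (rule goodI[of "C1 / (m * m)" "1 / m"])
    fix e1 e2 :: real assume h: "\<bar>e1\<bar> + \<bar>e2\<bar> \<le> d"
    note a = 1(3)[rule_format, OF h]
    have fm: "m \<le> \<bar>f e1 e2\<bar>" using m h by auto
    let ?E = "\<bar>e1\<bar> + \<bar>e2\<bar>"
    have nz: "f e1 e2 \<noteq> 0" "f 0 0 \<noteq> 0" using fm f0 m by auto
    have "inverse (f e1 e2) - inverse (f 0 0) = (f 0 0 - f e1 e2) / (f e1 e2 * f 0 0)"
      using nz by (simp add: field_simps)
    hence "\<bar>inverse (f e1 e2) - inverse (f 0 0)\<bar> = \<bar>f e1 e2 - f 0 0\<bar> / (\<bar>f e1 e2\<bar> * \<bar>f 0 0\<bar>)"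
      by (simp add: abs_mult abs_minus_commute)
    also have "\<dots> \<le> (C1 * ?E) / (m * m)"
      using a fm f0 m by (intro frac_le mult_mono) auto
    finally show "\<bar>inverse (f e1 e2) - inverse (f 0 0)\<bar> \<le> C1 / (m * m) * ?E" by simp
    show "\<bar>inverse (f e1 e2)\<bar> \<le> 1 / m"
      using fm m by (simp add: abs_inverse divide_simps)
  qed (use 1 m in auto)
qed

lemma good_divide:
  assumes "good d f" "good d g" "bb d g" "d \<ge> 0" shows "good d (\<lambda>e1 e2. f e1 e2 / g e1 e2)"
  using good_mult[OF assms(1) good_inv[OF assms(2,3,4)] assms(4)] by (simp add: divide_inverse)

lemma bb_mult:
  assumes "bb d f" "bb d g" shows "bb d (\<lambda>e1 e2. f e1 e2 * g e1 e2)"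
proof -
  obtain m1 where m1: "m1 > 0" "\<forall>e1 e2. \<bar>e1\<bar> + \<bar>e2\<bar> \<le> d \<longrightarrow> m1 \<le> \<bar>f e1 e2\<bar>"
    using assms(1) unfolding bb_def by blast
  obtain m2 where m2: "m2 > 0" "\<forall>e1 e2. \<bar>e1\<bar> + \<bar>e2\<bar> \<le> d \<longrightarrow> m2 \<le> \<bar>g e1 e2\<bar>"
    using assms(2) unfolding bb_def by blast
  show ?thesis unfolding bb_def
    using m1 m2 by (intro exI[of _ "m1 * m2"]) (auto simp: abs_mult intro!: mult_mono)
qed

lemma bb_const: "c \<noteq> 0 \<Longrightarrow> bb d (\<lambda>e1 e2. c)"
  unfolding bb_def by (intro exI[of _ "\<bar>c\<bar>"]) auto

lemma good_1:
  assumes "d \<ge> 0" "K \<ge> 0" "\<And>e. \<bar>e\<bar> \<le> d \<Longrightarrow> \<bar>q e - q 0\<bar> \<le> K * \<bar>e\<bar> \<and> \<bar>q e\<bar> \<le> B"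
  shows "good d (\<lambda>e1 e2. q e1)" "good d (\<lambda>e1 e2. q e2)"
proof -
  have B: "B \<ge> 0" using assms(3)[of 0] assms(1) by auto
  show "good d (\<lambda>e1 e2. q e1)"
  proof (rule goodI[of K B])
    fix e1 e2 :: real assume h: "\<bar>e1\<bar> + \<bar>e2\<bar> \<le> d"
    hence "\<bar>e1\<bar> \<le> d" by auto
    note a = assms(3)[OF this]
    have "K * \<bar>e1\<bar> \<le> K * (\<bar>e1\<bar> + \<bar>e2\<bar>)" using assms(2) by (intro mult_left_mono) auto
    thus "\<bar>q e1 - q 0\<bar> \<le> K * (\<bar>e1\<bar> + \<bar>e2\<bar>)" using a by linarith
    show "\<bar>q e1\<bar> \<le> B" using a by auto
  qed (use assms B in auto)
  show "good d (\<lambda>e1 e2. q e2)"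
  proof (rule goodI[of K B])
    fix e1 e2 :: real assume h: "\<bar>e1\<bar> + \<bar>e2\<bar> \<le> d"
    hence "\<bar>e2\<bar> \<le> d" by auto
    note a = assms(3)[OF this]
    have "K * \<bar>e2\<bar> \<le> K * (\<bar>e1\<bar> + \<bar>e2\<bar>)" using assms(2) by (intro mult_left_mono) auto
    thus "\<bar>q e2 - q 0\<bar> \<le> K * (\<bar>e1\<bar> + \<bar>e2\<bar>)" using a by linarith
    show "\<bar>q e2\<bar> \<le> B" using a by auto
  qed (use assms B in auto)
qed

lemma bb_1:
  assumes "m > 0" "\<And>e. \<bar>e\<bar> \<le> d \<Longrightarrow> m \<le> \<bar>q e\<bar>"
  shows "bb d (\<lambda>e1 e2. q e1)" "bb d (\<lambda>e1 e2. q e2)"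
  unfolding bb_def using assms by (intro exI[of _ m]; force)+

lemma integral_nonneg':
  fixes f :: "real \<Rightarrow> real"
  assumes "\<And>x. x \<in> S \<Longrightarrow> 0 \<le> f x" shows "0 \<le> integral S f"
proof (cases "f integrable_on S")
  case True thus ?thesis using assms by (intro integral_nonneg) auto
next
  case False thus ?thesis by (simp add: not_integrable_integral)
qed

lemma Qb:
  fixes F :: "real \<Rightarrow> real"
  assumes Fc: "continuous_on {0..A} F" and Fn: "\<And>a. a \<in> {0..A} \<Longrightarrow> 0 \<le> F a"
    and A: "0 \<le> A" and e: "\<bar>e\<bar> \<le> d"
  shows "\<bar>integral {0..A} (\<lambda>a. F a * exp (e * a)) - integral {0..A} F\<bar> \<le> (\<bar>e\<bar> * A * exp (d * A)) * integral {0..A} F"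
    and "exp (- (d * A)) * integral {0..A} F \<le> integral {0..A} (\<lambda>a. F a * exp (e * a))"
    and "integral {0..A} (\<lambda>a. F a * exp (e * a)) \<le> exp (d * A) * integral {0..A} F"
proof -
  have i1: "(\<lambda>a. F a * exp (e * a)) integrable_on {0..A}"
    by (intro integrable_continuous_interval continuous_intros Fc)
  have i2: "F integrable_on {0..A}" by (intro integrable_continuous_interval Fc)
  have pw: "\<bar>F a * exp (e * a) - F a\<bar> \<le> (\<bar>e\<bar> * A * exp (d * A)) * F a"
     "exp (- (d * A)) * F a \<le> F a * exp (e * a) \<and> F a * exp (e * a) \<le> exp (d * A) * F a"
    if "a \<in> {0..A}" for a
    using pw_bound[OF e, of a A "F a"] that Fn[OF that] by auto
  note r = int_lip[OF i1 i2, of "\<bar>e\<bar> * A * exp (d * A)" "exp (- (d * A))" "exp (d * A)", OF pw]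
  show "\<bar>integral {0..A} (\<lambda>a. F a * exp (e * a)) - integral {0..A} F\<bar> \<le> (\<bar>e\<bar> * A * exp (d * A)) * integral {0..A} F"
    "exp (- (d * A)) * integral {0..A} F \<le> integral {0..A} (\<lambda>a. F a * exp (e * a))"
    "integral {0..A} (\<lambda>a. F a * exp (e * a)) \<le> exp (d * A) * integral {0..A} F"
    using r by auto
qed

lemma goodQ:
  fixes F q :: "real \<Rightarrow> real"
  assumes Fc: "continuous_on {0..A} F" and Fn: "\<And>a. a \<in> {0..A} \<Longrightarrow> 0 \<le> F a"
    and A: "0 \<le> A" and d: "0 \<le> d"
    and q: "\<And>e. q e = integral {0..A} (\<lambda>a. F a * exp (e * a))"
  shows "good d (\<lambda>e1 e2. q e1)" "good d (\<lambda>e1 e2. q e2)"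
    and "integral {0..A} F > 0 \<Longrightarrow> bb d (\<lambda>e1 e2. q e1)"
    and "integral {0..A} F > 0 \<Longrightarrow> bb d (\<lambda>e1 e2. q e2)"
proof -
  have q0: "q 0 = integral {0..A} F" using q[of 0] by simp
  have I0: "integral {0..A} F \<ge> 0" using Fn by (intro integral_nonneg') auto
  have K: "A * exp (d * A) * integral {0..A} F \<ge> 0" using A I0 by simp
  have main: "\<bar>q e - q 0\<bar> \<le> (A * exp (d * A) * integral {0..A} F) * \<bar>e\<bar> \<and> \<bar>q e\<bar> \<le> exp (d * A) * integral {0..A} F"
    if e: "\<bar>e\<bar> \<le> d" for e
  proof -
    note r = Qb[OF Fc Fn A e]
    have "0 \<le> exp (- (d * A)) * integral {0..A} F" using I0 by simp
    thus ?thesis using r unfolding q0 q[of e] by (auto simp: algebra_simps)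
  qed
  show "good d (\<lambda>e1 e2. q e1)" "good d (\<lambda>e1 e2. q e2)"
    using good_1[OF d K main] by auto
  assume pos: "integral {0..A} F > 0"
  have lb: "exp (- (d * A)) * integral {0..A} F \<le> \<bar>q e\<bar>" if e: "\<bar>e\<bar> \<le> d" for e
    using Qb(2)[OF Fc Fn A e] q[of e] by auto
  show "bb d (\<lambda>e1 e2. q e1)" "bb d (\<lambda>e1 e2. q e2)"
    using bb_1[of "exp (- (d * A)) * integral {0..A} F" d q] lb pos by auto
qed

lemma Pib:
  assumes k: "continuous_on {0..A} k" and mu: "continuous_on {0..A} mu"
    and kn: "\<And>s. s \<in> {0..A} \<Longrightarrow> 0 \<le> k s" and a: "a \<in> {0..A}" and e: "\<bar>e\<bar> \<le> d"
  shows "\<bar>G_pi A k mu (zeta - e) a - G_pi A k mu zeta a\<bar> \<le> (\<bar>e\<bar> * A * exp (d * A)) * G_pi A k mu zeta a"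
    and "exp (- (d * A)) * G_pi A k mu zeta a \<le> G_pi A k mu (zeta - e) a"
    and "G_pi A k mu (zeta - e) a \<le> exp (d * A) * G_pi A k mu zeta a"
proof -
  define F where "F s = k s * exp (- integral {a..s} (\<lambda>l. zeta + mu l))" for s
  have sh: "G_pi A k mu (zeta - e) a = integral {a..A} (\<lambda>s. F s * exp (e * (s - a)))"
    unfolding F_def by (rule Gpi_shift[OF mu a])
  have z: "G_pi A k mu zeta a = integral {a..A} F" unfolding F_def G_pi_def by simp
  have sub: "{a..A} \<subseteq> {0..A}" using a by auto
  have ii: "(\<lambda>l. zeta + mu l) integrable_on {a..A}"
    by (intro integrable_continuous_interval continuous_intros continuous_on_subset[OF mu sub])
  have Fc: "continuous_on {a..A} F" unfolding F_def
    by (intro continuous_intros continuous_on_subset[OF k sub] indefinite_integral_continuous_1 ii)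
  have i1: "(\<lambda>s. F s * exp (e * (s - a))) integrable_on {a..A}"
    by (intro integrable_continuous_interval continuous_intros Fc)
  have i2: "F integrable_on {a..A}" by (intro integrable_continuous_interval Fc)
  have pw: "\<bar>F s * exp (e * (s - a)) - F s\<bar> \<le> (\<bar>e\<bar> * A * exp (d * A)) * F s"
     "exp (- (d * A)) * F s \<le> F s * exp (e * (s - a)) \<and> F s * exp (e * (s - a)) \<le> exp (d * A) * F s"
    if s: "s \<in> {a..A}" for s
  proof -
    have "0 \<le> F s" unfolding F_def using kn s a by auto
    thus "\<bar>F s * exp (e * (s - a)) - F s\<bar> \<le> (\<bar>e\<bar> * A * exp (d * A)) * F s"
     "exp (- (d * A)) * F s \<le> F s * exp (e * (s - a)) \<and> F s * exp (e * (s - a)) \<le> exp (d * A) * F s"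
      using pw_bound[OF e, of "s - a" A "F s"] s a by auto
  qed
  note r = int_lip[OF i1 i2, of "\<bar>e\<bar> * A * exp (d * A)" "exp (- (d * A))" "exp (d * A)", OF pw]
  show "\<bar>G_pi A k mu (zeta - e) a - G_pi A k mu zeta a\<bar> \<le> (\<bar>e\<bar> * A * exp (d * A)) * G_pi A k mu zeta a"
    "exp (- (d * A)) * G_pi A k mu zeta a \<le> G_pi A k mu (zeta - e) a"
    "G_pi A k mu (zeta - e) a \<le> exp (d * A) * G_pi A k mu zeta a"
    unfolding sh z using r by auto
qed

lemma pos_int:
  fixes f :: "real \<Rightarrow> real"
  assumes "continuous_on {0..A} f" "\<And>x. x \<in> {0..A} \<Longrightarrow> 0 \<le> f x" "0 < A"
    "x \<in> {0..A}" "f x > 0"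
  shows "integral {0..A} f > 0"
proof -
  have "integral {0..A} f \<ge> 0" using assms(2) by (intro integral_nonneg') auto
  moreover have "integral {0..A} f \<noteq> 0"
  proof
    assume "integral {0..A} f = 0"
    hence "\<forall>x\<in>{0..A}. f x = 0"
      using Equivalence_Lebesgue_Henstock_Integration.integral_eq_0_iff[OF assms(1) assms(3) assms(2)] by blast
    thus False using assms(4,5) by force
  qed
  ultimately show ?thesis by linarith
qed

lemma exists_pos:
  fixes f :: "real \<Rightarrow> real"
  assumes "\<And>x. x \<in> {0..A} \<Longrightarrow> 0 \<le> f x" "integral {0..A} f > 0"
  shows "\<exists>x\<in>{0<..A}. f x > 0"
proof (rule ccontr)
  assume "\<not> ?thesis"
  hence n: "\<And>x. x \<in> {0<..A} \<Longrightarrow> \<not> f x > 0" by blast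
  have z: "\<And>x. x \<in> {0..A} - {0} \<Longrightarrow> f x = 0"
  proof -
    fix x assume x: "x \<in> {0..A} - {0}"
    hence "x \<in> {0<..A}" by auto
    hence "\<not> f x > 0" by (rule n)
    moreover have "0 \<le> f x" using x assms(1) by blast
    ultimately show "f x = 0" by linarith
  qed
  have "integral {0..A} f = integral {0..A} (\<lambda>x. 0::real)"
    by (rule integral_spike[of "{0}"]) (use z in auto)
  thus False using assms(2) by simp
qed

lemma goodIP:
  fixes zeta :: real
  assumes k: "continuous_on {0..A} k" and mu: "continuous_on {0..A} mu"
    and kn: "\<And>s. s \<in> {0..A} \<Longrightarrow> 0 \<le> k s" and A: "0 \<le> A" and d: "0 \<le> d"
  defines "q \<equiv> \<lambda>e. ip A (G_pi A k mu (zeta - e)) (surv mu zeta)"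
  shows "good d (\<lambda>e1 e2. q e1)" "good d (\<lambda>e1 e2. q e2)"
    and "q 0 > 0 \<Longrightarrow> bb d (\<lambda>e1 e2. q e1)"
    and "q 0 > 0 \<Longrightarrow> bb d (\<lambda>e1 e2. q e2)"
proof -
  have q0: "q 0 = ip A (G_pi A k mu zeta) (surv mu zeta)" unfolding q_def by simp
  have Gn: "0 \<le> G_pi A k mu zeta a" if "a \<in> {0..A}" for a
    unfolding G_pi_def using kn that by (intro integral_nonneg') auto
  have I0: "q 0 \<ge> 0" unfolding q0 ip_def
    by (intro integral_nonneg' mult_nonneg_nonneg Gn less_imp_le[OF surv_pos])
  have bnd: "\<bar>q e - q 0\<bar> \<le> (\<bar>e\<bar> * A * exp (d * A)) * q 0 \<and> exp (- (d * A)) * q 0 \<le> q e \<and> q e \<le> exp (d * A) * q 0"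
    if e: "\<bar>e\<bar> \<le> d" for e
  proof -
    let ?f = "\<lambda>a. G_pi A k mu (zeta - e) a * surv mu zeta a"
    let ?g = "\<lambda>a. G_pi A k mu zeta a * surv mu zeta a"
    have i1: "?f integrable_on {0..A}"
      by (intro integrable_continuous_interval continuous_intros Gpi_cont surv_cont k mu)
    have i2: "?g integrable_on {0..A}"
      by (intro integrable_continuous_interval continuous_intros Gpi_cont surv_cont k mu)
    have pw: "\<bar>?f a - ?g a\<bar> \<le> (\<bar>e\<bar> * A * exp (d * A)) * ?g a"
      "exp (- (d * A)) * ?g a \<le> ?f a \<and> ?f a \<le> exp (d * A) * ?g a" if a: "a \<in> {0..A}" for a
    proof -
      note p = Pib[OF k mu kn a e, of zeta]
      have S: "0 < surv mu zeta a" by (rule surv_pos)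
      have "\<bar>?f a - ?g a\<bar> = \<bar>G_pi A k mu (zeta - e) a - G_pi A k mu zeta a\<bar> * surv mu zeta a"
        using S by (simp add: abs_mult left_diff_distrib[symmetric])
      also have "\<dots> \<le> ((\<bar>e\<bar> * A * exp (d * A)) * G_pi A k mu zeta a) * surv mu zeta a"
        using p(1) S by (intro mult_right_mono) auto
      finally show "\<bar>?f a - ?g a\<bar> \<le> (\<bar>e\<bar> * A * exp (d * A)) * ?g a" by (simp add: mult.assoc)
      have "(exp (- (d * A)) * G_pi A k mu zeta a) * surv mu zeta a \<le> ?f a"
        using p(2) S by (intro mult_right_mono) auto
      moreover have "?f a \<le> (exp (d * A) * G_pi A k mu zeta a) * surv mu zeta a"
        using p(3) S by (intro mult_right_mono) auto
      ultimately show "exp (- (d * A)) * ?g a \<le> ?f a \<and> ?f a \<le> exp (d * A) * ?g a"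
        by (simp add: mult.assoc)
    qed
    note r = int_lip[OF i1 i2, of "\<bar>e\<bar> * A * exp (d * A)" "exp (- (d * A))" "exp (d * A)", OF pw]
    show ?thesis using r unfolding q0 unfolding q_def ip_def by auto
  qed
  have K: "A * exp (d * A) * q 0 \<ge> 0" using A I0 by simp
  have main: "\<bar>q e - q 0\<bar> \<le> (A * exp (d * A) * q 0) * \<bar>e\<bar> \<and> \<bar>q e\<bar> \<le> exp (d * A) * q 0"
    if e: "\<bar>e\<bar> \<le> d" for e
  proof -
    have "0 \<le> exp (- (d * A)) * q 0" using I0 by simp
    thus ?thesis using bnd[OF e] by (auto simp: algebra_simps)
  qed
  show "good d (\<lambda>e1 e2. q e1)" "good d (\<lambda>e1 e2. q e2)"
    using good_1[OF d K main] by auto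
  assume pos: "q 0 > 0"
  have lb: "exp (- (d * A)) * q 0 \<le> \<bar>q e\<bar>" if e: "\<bar>e\<bar> \<le> d" for e
    using bnd[OF e] by auto
  show "bb d (\<lambda>e1 e2. q e1)" "bb d (\<lambda>e1 e2. q e2)"
    using bb_1[of "exp (- (d * A)) * q 0" d q] lb pos by auto
qed

lemma exp_bound_from_r:
  fixes a p q R :: real
  assumes "sqrt ((a * p)\<^sup>2 + q\<^sup>2) \<le> R" "R < a"
  shows "\<bar>p\<bar> < 1"
proof -
  have e: "sqrt ((a * p)\<^sup>2) = \<bar>a * p\<bar>" by (rule real_sqrt_abs)
  have "sqrt ((a * p)\<^sup>2) \<le> sqrt ((a * p)\<^sup>2 + q\<^sup>2)" by (intro real_sqrt_le_mono) simp
  hence l: "\<bar>a * p\<bar> < a" using assms e by linarith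
  have "0 \<le> sqrt ((a * p)\<^sup>2 + q\<^sup>2)" by (rule real_sqrt_ge_zero) simp
  hence a: "a > 0" using assms by linarith
  have "a * \<bar>p\<bar> < a * 1" using l a by (simp add: abs_mult)
  thus ?thesis using a by (simp only: mult_less_cancel_left_pos)
qed

lemma exp_bound_from_r2:
  fixes a p q R :: real
  assumes "sqrt (q\<^sup>2 + (a * p)\<^sup>2) \<le> R" "R < a"
  shows "\<bar>p\<bar> < 1"
  using exp_bound_from_r[of a p q R] assms by (simp only: add.commute)

theorem lemma2:
  fixes A :: real and k1 mu1 g1 k2 mu2 g2 :: "real \<Rightarrow> real"
    and zeta1 zeta2 \<epsilon> \<beta> x1 x2 \<delta> :: real
  assumes A_pos: "A > 0"
    and cont: "continuous_on {0..A} k1" "continuous_on {0..A} mu1" "continuous_on {0..A} g1"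
              "continuous_on {0..A} k2" "continuous_on {0..A} mu2" "continuous_on {0..A} g2"
    and nonneg: "\<forall>t\<in>{0..A}. k1 t \<ge> 0 \<and> mu1 t \<ge> 0 \<and> g1 t \<ge> 0 \<and> k2 t \<ge> 0 \<and> mu2 t \<ge> 0 \<and> g2 t \<ge> 0"
    and posint: "integral {0..A} k1 > 0" "integral {0..A} mu1 > 0" "integral {0..A} g1 > 0"
                "integral {0..A} k2 > 0" "integral {0..A} mu2 > 0" "integral {0..A} g2 > 0"
    and zeta_pos: "zeta1 > 0" "zeta2 > 0"
    and char1: "integral {0..A} (\<lambda>a. k1 a * surv mu1 zeta1 a) = 1"
    and char2: "integral {0..A} (\<lambda>a. k2 a * surv mu2 zeta2 a) = 1"
    and eps: "\<epsilon> > 0"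
    and beta: "\<beta> > \<epsilon> / (4 * (1 + \<epsilon>))"
    and x1: "x1 > 1 / (zeta2 * G_gamma A g2 zeta1 mu1)"
    and b_pos: "zeta1 - zeta2 + 1 / (x1 * G_gamma A g2 zeta1 mu1) > 0"
    and x2: "zeta1 - zeta2 + 1 / (x1 * G_gamma A g2 zeta1 mu1) = G_gamma A g1 zeta2 mu2 * x2"
    and delta: "\<delta> > 0"
  shows "\<forall>R. 0 < R \<and> R < min (1 / (x1 * G_gamma A g2 zeta1 mu1))
                         (zeta1 - zeta2 + 1 / (x1 * G_gamma A g2 zeta1 mu1)) \<longrightarrow>
          (\<exists>C>0. \<forall>eta1 eta2 e1 e2.
             sqrt (((1 / (x1 * G_gamma A g2 zeta1 mu1)) * (1 - exp (- eta1)))\<^sup>2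
                 + ((zeta1 - zeta2 + 1 / (x1 * G_gamma A g2 zeta1 mu1)) * (exp eta2 - 1))\<^sup>2) \<le> R
             \<and> \<bar>e1\<bar> + \<bar>e2\<bar> \<le> \<delta> \<longrightarrow>
             \<bar>u_hat A k1 mu1 g1 k2 mu2 g2 zeta1 zeta2 x1 x2 \<epsilon> \<beta> eta1 eta2 e1 e2
               - u_hat A k1 mu1 g1 k2 mu2 g2 zeta1 zeta2 x1 x2 \<epsilon> \<beta> eta1 eta2 0 0\<bar>
             \<le> C * (\<bar>e1\<bar> + \<bar>e2\<bar>))"
proof (intro allI impI)
  fix R assume R: "0 < R \<and> R < min (1 / (x1 * G_gamma A g2 zeta1 mu1))
                         (zeta1 - zeta2 + 1 / (x1 * G_gamma A g2 zeta1 mu1))"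
  have d: "0 \<le> \<delta>" using delta by simp
  have A0: "0 \<le> A" using A_pos by simp
  have nn: "\<And>t. t \<in> {0..A} \<Longrightarrow> k1 t \<ge> 0 \<and> mu1 t \<ge> 0 \<and> g1 t \<ge> 0 \<and> k2 t \<ge> 0 \<and> mu2 t \<ge> 0 \<and> g2 t \<ge> 0"
    using nonneg by blast
  have s1: "continuous_on {0..A} (surv mu1 zeta1)" by (rule surv_cont[OF cont(2)])
  have s2: "continuous_on {0..A} (surv mu2 zeta2)" by (rule surv_cont[OF cont(5)])
  have sp: "\<And>mu z a. 0 \<le> surv mu z a" using surv_pos by (simp add: less_imp_le)
  have Fg2c: "continuous_on {0..A} (\<lambda>a. g2 a * surv mu1 zeta1 a)" by (intro continuous_intros cont s1)
  have Fg2n: "\<And>a. a \<in> {0..A} \<Longrightarrow> 0 \<le> g2 a * surv mu1 zeta1 a" using nn sp by (simp add: mult_nonneg_nonneg)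
  have G0pos: "G_gamma A g2 zeta1 mu1 > 0"
  proof -
    obtain x where x: "x \<in> {0<..A}" "g2 x > 0" using exists_pos[of A g2] posint(6) nn by auto
    show ?thesis unfolding G_gamma_def
      by (rule pos_int[OF Fg2c Fg2n A_pos, of x]) (use x surv_pos in auto)
  qed
  have good_ga2: "good \<delta> (\<lambda>e1 e2. G_gamma A g2 (zeta1 - e1) mu1)" by (rule goodQ(1)[OF Fg2c Fg2n A0 d]) (simp_all add: Gg_shift[OF cont(2)])
  have bb_ga2: "bb \<delta> (\<lambda>e1 e2. G_gamma A g2 (zeta1 - e1) mu1)"
    by (rule goodQ(3)[OF Fg2c Fg2n A0 d]) (simp_all add: Gg_shift[OF cont(2)] G0pos[unfolded G_gamma_def])
  have Fg1c: "continuous_on {0..A} (\<lambda>a. g1 a * surv mu2 zeta2 a)" by (intro continuous_intros cont s2)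
  have Fg1n: "\<And>a. a \<in> {0..A} \<Longrightarrow> 0 \<le> g1 a * surv mu2 zeta2 a" using nn sp by (simp add: mult_nonneg_nonneg)
  have good_ga1: "good \<delta> (\<lambda>e1 e2. G_gamma A g1 (zeta2 - e2) mu2)" by (rule goodQ(2)[OF Fg1c Fg1n A0 d]) (simp_all add: Gg_shift[OF cont(5)])
  have Fk1c: "continuous_on {0..A} (\<lambda>a. a * k1 a * surv mu1 zeta1 a)" by (intro continuous_intros cont s1)
  have Fk1n: "\<And>a. a \<in> {0..A} \<Longrightarrow> 0 \<le> a * k1 a * surv mu1 zeta1 a" using nn sp by (simp add: mult_nonneg_nonneg)
  have good_ka1: "good \<delta> (\<lambda>e1 e2. G_kappa A k1 mu1 (zeta1 - e1))" by (rule goodQ(1)[OF Fk1c Fk1n A0 d]) (simp_all add: Gk_shift[OF cont(2)])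
  have Fk2c: "continuous_on {0..A} (\<lambda>a. a * k2 a * surv mu2 zeta2 a)" by (intro continuous_intros cont s2)
  have Fk2n: "\<And>a. a \<in> {0..A} \<Longrightarrow> 0 \<le> a * k2 a * surv mu2 zeta2 a" using nn sp by (simp add: mult_nonneg_nonneg)
  have K2pos: "integral {0..A} (\<lambda>a. a * k2 a * surv mu2 zeta2 a) > 0"
  proof -
    obtain x where x: "x \<in> {0<..A}" "k2 x > 0" using exists_pos[of A k2] posint(4) nn by auto
    show ?thesis
      by (rule pos_int[OF Fk2c Fk2n A_pos, of x]) (use x surv_pos in auto)
  qed
  have good_ka2: "good \<delta> (\<lambda>e1 e2. G_kappa A k2 mu2 (zeta2 - e2))" by (rule goodQ(2)[OF Fk2c Fk2n A0 d]) (simp_all add: Gk_shift[OF cont(5)])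
  have bb_ka2: "bb \<delta> (\<lambda>e1 e2. G_kappa A k2 mu2 (zeta2 - e2))" by (rule goodQ(4)[OF Fk2c Fk2n A0 d]) (simp_all add: Gk_shift[OF cont(5)] K2pos)
  have k1n: "\<And>s. s \<in> {0..A} \<Longrightarrow> 0 \<le> k1 s" using nn by blast
  have k2n: "\<And>s. s \<in> {0..A} \<Longrightarrow> 0 \<le> k2 s" using nn by blast
  have good_ip1: "good \<delta> (\<lambda>e1 e2. ip A (G_pi A k1 mu1 (zeta1 - e1)) (surv mu1 zeta1))" by (rule goodIP(1)[OF cont(1) cont(2) k1n A0 d]) simp_all
  have good_ip2: "good \<delta> (\<lambda>e1 e2. ip A (G_pi A k2 mu2 (zeta2 - e2)) (surv mu2 zeta2))" by (rule goodIP(2)[OF cont(4) cont(5) k2n A0 d]) simp_all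
  have IP1pos: "ip A (G_pi A k1 mu1 zeta1) (surv mu1 zeta1) > 0"
  proof -
    have c: "continuous_on {0..A} (\<lambda>a. G_pi A k1 mu1 zeta1 a * surv mu1 zeta1 a)"
      by (intro continuous_intros Gpi_cont cont s1)
    have n: "\<And>a. a \<in> {0..A} \<Longrightarrow> 0 \<le> G_pi A k1 mu1 zeta1 a * surv mu1 zeta1 a"
      unfolding G_pi_def using k1n sp by (intro mult_nonneg_nonneg integral_nonneg') auto
    have s0: "surv mu1 zeta1 0 = 1" unfolding surv_def by simp
    have p0: "G_pi A k1 mu1 zeta1 0 = 1" unfolding G_pi_def using char1 unfolding surv_def by simp
    show ?thesis unfolding ip_def
      by (rule pos_int[OF c n A_pos, of 0]) (use s0 p0 A0 in auto)
  qed
  have bb_ip1: "bb \<delta> (\<lambda>e1 e2. ip A (G_pi A k1 mu1 (zeta1 - e1)) (surv mu1 zeta1))"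
    by (rule goodIP(3)[OF cont(1) cont(2) k1n A0 d]) (simp_all add: IP1pos)

  have x1nz: "x1 \<noteq> 0" using R by auto

  define F0 where "F0 e1 e2 = (zeta2 - e2) - 1 / (x1 * G_gamma A g2 (zeta1 - e1) mu1)
     + \<beta> * ((1 + \<epsilon>) * ((zeta2 - e2) - (zeta1 - e1)) - \<epsilon> / (x1 * G_gamma A g2 (zeta1 - e1) mu1))" for e1 e2
  define F1 where "F1 (e1::real) (e2::real) = G_kappa A k1 mu1 (zeta1 - e1) /
     (G_gamma A g2 (zeta1 - e1) mu1 * ip A (G_pi A k1 mu1 (zeta1 - e1)) (surv mu1 zeta1) * x1)" for e1 e2
  define F2 where "F2 (e1::real) (e2::real) = (1 + \<epsilon>) * (G_gamma A g1 (zeta2 - e2) mu2 * ip A (G_pi A k2 mu2 (zeta2 - e2)) (surv mu2 zeta2) * x2)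
     / G_kappa A k2 mu2 (zeta2 - e2)" for e1 e2

  have bb_x1ga2: "bb \<delta> (\<lambda>e1 e2. x1 * G_gamma A g2 (zeta1 - e1) mu1)"
    by (rule bb_mult[OF bb_const[OF x1nz] bb_ga2])
  have good_x1ga2: "good \<delta> (\<lambda>e1 e2. x1 * G_gamma A g2 (zeta1 - e1) mu1)"
    by (rule good_mult[OF good_const good_ga2 d])
  have gF0: "good \<delta> F0"
  proof -
    have "good \<delta> (\<lambda>e1 e2. (zeta2 - e2) - 1 / (x1 * G_gamma A g2 (zeta1 - e1) mu1)
     + \<beta> * ((1 + \<epsilon>) * ((zeta2 - e2) - (zeta1 - e1)) - \<epsilon> / (x1 * G_gamma A g2 (zeta1 - e1) mu1)))"
      by (intro good_add good_diff good_mult good_const good_fst good_snd d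
            good_divide[OF good_const good_x1ga2 bb_x1ga2 d])
    thus ?thesis unfolding F0_def[abs_def] .
  qed
  have gF1: "good \<delta> F1"
  proof -
    have "good \<delta> (\<lambda>e1 e2. G_kappa A k1 mu1 (zeta1 - e1) /
     (G_gamma A g2 (zeta1 - e1) mu1 * ip A (G_pi A k1 mu1 (zeta1 - e1)) (surv mu1 zeta1) * x1))"
      by (intro good_divide good_ka1 good_mult good_ga2 good_ip1 good_const d
                bb_mult bb_ga2 bb_ip1 bb_const x1nz)
    thus ?thesis unfolding F1_def[abs_def] .
  qed
  have gF2: "good \<delta> F2"
  proof -
    have "good \<delta> (\<lambda>e1 e2. (1 + \<epsilon>) * (G_gamma A g1 (zeta2 - e2) mu2 * ip A (G_pi A k2 mu2 (zeta2 - e2)) (surv mu2 zeta2) * x2)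
     / G_kappa A k2 mu2 (zeta2 - e2))"
      by (intro good_divide good_ka2 bb_ka2 good_mult good_ga1 good_ip2 good_const d)
    thus ?thesis unfolding F2_def[abs_def] .
  qed
  obtain C0 B0 where c0: "C0 \<ge> 0" "\<And>e1 e2. \<bar>e1\<bar> + \<bar>e2\<bar> \<le> \<delta> \<Longrightarrow> \<bar>F0 e1 e2 - F0 0 0\<bar> \<le> C0 * (\<bar>e1\<bar> + \<bar>e2\<bar>)"
    using gF0 unfolding good_def by blast
  obtain C1 B1 where c1: "C1 \<ge> 0" "\<And>e1 e2. \<bar>e1\<bar> + \<bar>e2\<bar> \<le> \<delta> \<Longrightarrow> \<bar>F1 e1 e2 - F1 0 0\<bar> \<le> C1 * (\<bar>e1\<bar> + \<bar>e2\<bar>)"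
    using gF1 unfolding good_def by blast
  obtain C2 B2 where c2: "C2 \<ge> 0" "\<And>e1 e2. \<bar>e1\<bar> + \<bar>e2\<bar> \<le> \<delta> \<Longrightarrow> \<bar>F2 e1 e2 - F2 0 0\<bar> \<le> C2 * (\<bar>e1\<bar> + \<bar>e2\<bar>)"
    using gF2 unfolding good_def by blast

  have U: "u_hat A k1 mu1 g1 k2 mu2 g2 zeta1 zeta2 x1 x2 \<epsilon> \<beta> eta1 eta2 e1 e2
      = F0 e1 e2 + \<beta> * (F2 e1 e2 * exp eta2 - F1 e1 e2 * exp (- eta1))" for eta1 eta2 e1 e2
    unfolding u_hat_def Let_def F0_def F1_def F2_def by (simp add: algebra_simps)

  show "\<exists>C>0. \<forall>eta1 eta2 e1 e2.
             sqrt (((1 / (x1 * G_gamma A g2 zeta1 mu1)) * (1 - exp (- eta1)))\<^sup>2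
                 + ((zeta1 - zeta2 + 1 / (x1 * G_gamma A g2 zeta1 mu1)) * (exp eta2 - 1))\<^sup>2) \<le> R
             \<and> \<bar>e1\<bar> + \<bar>e2\<bar> \<le> \<delta> \<longrightarrow>
             \<bar>u_hat A k1 mu1 g1 k2 mu2 g2 zeta1 zeta2 x1 x2 \<epsilon> \<beta> eta1 eta2 e1 e2
               - u_hat A k1 mu1 g1 k2 mu2 g2 zeta1 zeta2 x1 x2 \<epsilon> \<beta> eta1 eta2 0 0\<bar>
             \<le> C * (\<bar>e1\<bar> + \<bar>e2\<bar>)"
  proof (intro exI[of _ "C0 + \<bar>\<beta>\<bar> * (2 * C1 + 2 * C2) + 1"] conjI allI impI)
    show "0 < C0 + \<bar>\<beta>\<bar> * (2 * C1 + 2 * C2) + 1" using c0 c1 c2 by (simp add: add_nonneg_pos)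
    fix eta1 eta2 e1 e2 :: real
    assume h: "sqrt (((1 / (x1 * G_gamma A g2 zeta1 mu1)) * (1 - exp (- eta1)))\<^sup>2
                 + ((zeta1 - zeta2 + 1 / (x1 * G_gamma A g2 zeta1 mu1)) * (exp eta2 - 1))\<^sup>2) \<le> R
             \<and> \<bar>e1\<bar> + \<bar>e2\<bar> \<le> \<delta>"
    let ?E = "\<bar>e1\<bar> + \<bar>e2\<bar>"
    have hr: "sqrt (((1 / (x1 * G_gamma A g2 zeta1 mu1)) * (1 - exp (- eta1)))\<^sup>2
                 + ((zeta1 - zeta2 + 1 / (x1 * G_gamma A g2 zeta1 mu1)) * (exp eta2 - 1))\<^sup>2) \<le> R"
      using h by blast
    have Ra: "R < 1 / (x1 * G_gamma A g2 zeta1 mu1)" using R by simp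
    have Rb: "R < zeta1 - zeta2 + 1 / (x1 * G_gamma A g2 zeta1 mu1)" using R by simp
    have "\<bar>1 - exp (- eta1)\<bar> < 1" by (rule exp_bound_from_r[OF hr Ra])
    hence X: "exp (- eta1) < 2" by (simp add: abs_less_iff)
    have "\<bar>exp eta2 - 1\<bar> < 1" by (rule exp_bound_from_r2[OF hr Rb])
    hence Y: "exp eta2 < 2" by (simp add: abs_less_iff)
    define D0 where "D0 = F0 e1 e2 - F0 0 0"
    define D1 where "D1 = F1 e1 e2 - F1 0 0"
    define D2 where "D2 = F2 e1 e2 - F2 0 0"
    have d0: "\<bar>D0\<bar> \<le> C0 * ?E" unfolding D0_def using c0 h by blast
    have d1: "\<bar>D1\<bar> \<le> C1 * ?E" unfolding D1_def using c1 h by blast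
    have d2: "\<bar>D2\<bar> \<le> C2 * ?E" unfolding D2_def using c2 h by blast
    have diff: "u_hat A k1 mu1 g1 k2 mu2 g2 zeta1 zeta2 x1 x2 \<epsilon> \<beta> eta1 eta2 e1 e2
               - u_hat A k1 mu1 g1 k2 mu2 g2 zeta1 zeta2 x1 x2 \<epsilon> \<beta> eta1 eta2 0 0
        = D0 + \<beta> * (D2 * exp eta2 - D1 * exp (- eta1))"
      unfolding U D0_def D1_def D2_def by (simp add: algebra_simps)
    have t2: "\<bar>D2 * exp eta2\<bar> \<le> C2 * ?E * 2"
      unfolding abs_mult using d2 Y by (intro mult_mono) auto
    have t1: "\<bar>D1 * exp (- eta1)\<bar> \<le> C1 * ?E * 2"
      unfolding abs_mult using d1 X by (intro mult_mono) auto
    have "\<bar>D2 * exp eta2 - D1 * exp (- eta1)\<bar> \<le> (2 * C1 + 2 * C2) * ?E"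
      using t1 t2 by (smt (verit) distrib_right mult.commute mult.left_commute)
    hence t3: "\<bar>\<beta> * (D2 * exp eta2 - D1 * exp (- eta1))\<bar> \<le> \<bar>\<beta>\<bar> * ((2 * C1 + 2 * C2) * ?E)"
      unfolding abs_mult by (intro mult_left_mono) auto
    have "\<bar>D0 + \<beta> * (D2 * exp eta2 - D1 * exp (- eta1))\<bar> \<le> C0 * ?E + \<bar>\<beta>\<bar> * ((2 * C1 + 2 * C2) * ?E)"
      using d0 t3 by linarith
    also have "\<dots> \<le> (C0 + \<bar>\<beta>\<bar> * (2 * C1 + 2 * C2) + 1) * ?E"
      by (simp add: algebra_simps)
    finally show "\<bar>u_hat A k1 mu1 g1 k2 mu2 g2 zeta1 zeta2 x1 x2 \<epsilon> \<beta> eta1 eta2 e1 e2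
               - u_hat A k1 mu1 g1 k2 mu2 g2 zeta1 zeta2 x1 x2 \<epsilon> \<beta> eta1 eta2 0 0\<bar>
             \<le> (C0 + \<bar>\<beta>\<bar> * (2 * C1 + 2 * C2) + 1) * ?E" unfolding diff .
  qed
qed

end
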